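(* Let $\Omega>0$, $c_{\max}>0$, and let $x:\mathbb{R}\to\mathbb{R}$ be a $2\Omega$-bandlimited, $c_{\max}$-bounded signal with finite energy. Suppose $x$ is sampled by an AIF-TEM with parameters $\kappa>0$, $\delta>0$, window size $w\ge 1$, margin $\beta>0$ and a successfully operating MAP block, producing firing times $t_0<t_1<\dots<t_N$, biases $b_1,\dots,b_N$ and local maximal amplitudes $c_1,\dots,c_N$. Then the average oversampling $OS_a$ satisfies $$OS_{a}\le \frac{\mathbb{E}[b_n]+\mathbb{E}[c_n]}{\kappa\delta}\,\frac{\pi}{\Omega}\le \frac{\mathbb{E}[b_n]+c_{\max}}{\kappa\delta}\,\frac{\pi}{\Omega}.$$
   Context: A signal $x$ is $2\Omega$-bandlimited if its Fourier transform vanishes outside $[-\Omega,\Omega]$; it is $c_{\max}$-bounded if $|x(t)|\le c_{\max}$ for all $t$; it has finite energy if $\int_{-\infty}^\infty |x(t)|^2dt<\infty$. An AIF-TEM (adaptive integrate-and-fire time encoding machine) with parameters $\kappa,\delta>0$ and window size $w$ produces a strictly increasing sequence of firing times $t_n$ and biases $b_n>0$ such that for each $n$, $\frac1\kappa\int_{t_{n-1}}^{t_n}(x(s)+b_n)\,ds=\delta$. The local maximal amplitude is $c_n=\max_{t_{n-w}\le t\le t_n}|x(t)|$. The MAP block operates successfully (with margin $\beta>0$) if $b_n\ge c_n+\beta$ for all $n$. Write $T_n=t_n-t_{n-1}$. $\mathbb{E}[\cdot]$ denotes the average over the sample indices $n=1,\dots,N$. The average sampling frequency is $f_s=1/\mathbb{E}[T_n]$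 and the average oversampling is $OS_a=f_s\cdot\frac{\pi}{\Omega}$. *)

theory Defs
  imports "HOL-Analysis.Analysis"
begin

text \<open>2\<Omega>-bandlimited: the Fourier transform X of x vanishes outside [-\<Omega>,\<Omega>],
  i.e. x is the inverse Fourier transform of an (integrable) spectrum supported on [-\<Omega>,\<Omega>].\<close>
definition bandlimited :: "real \<Rightarrow> (real \<Rightarrow> real) \<Rightarrow> bool" where
  "bandlimited \<Omega> x \<longleftrightarrow>
     (\<exists>X :: real \<Rightarrow> complex. X absolutely_integrable_on {-\<Omega>..\<Omega>} \<and>
        (\<forall>t. complex_of_real (x t) =
              integral {-\<Omega>..\<Omega>} (\<lambda>\<omega>. X \<omega> * exp (\<i> * complex_of_real (\<omega> * t))) / (2 * complex_of_real pi)))"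

definition bounded_by :: "real \<Rightarrow> (real \<Rightarrow> real) \<Rightarrow> bool" where
  "bounded_by cmax x \<longleftrightarrow> (\<forall>t. \<bar>x t\<bar> \<le> cmax)"

definition finite_energy :: "(real \<Rightarrow> real) \<Rightarrow> bool" where
  "finite_energy x \<longleftrightarrow> x \<in> borel_measurable lborel \<and> integrable lborel (\<lambda>t. (x t)\<^sup>2)"

text \<open>Local maximal amplitude c_n = max over [t_{n-w}, t_n] of |x|
  (indices below 0 are truncated to 0, i.e. the window starts at t_0).\<close>
definition local_max_amp :: "(real \<Rightarrow> real) \<Rightarrow> (nat \<Rightarrow> real) \<Rightarrow> nat \<Rightarrow> nat \<Rightarrow> real" where
  "local_max_amp x t w n = (SUP s\<in>{t (n - w)..t n}. \<bar>x s\<bar>)"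

definition avg :: "nat \<Rightarrow> (nat \<Rightarrow> real) \<Rightarrow> real" where
  "avg N f = (\<Sum>n=1..N. f n) / real N"

definition avg_oversampling :: "nat \<Rightarrow> (nat \<Rightarrow> real) \<Rightarrow> real \<Rightarrow> real" where
  "avg_oversampling N t \<Omega> = (1 / avg N (\<lambda>n. t n - t (n - 1))) * (pi / \<Omega>)"

end

theory Submission
  imports Defs
begin

theorem theorem1:
  fixes x :: "real \<Rightarrow> real" and t b :: "nat \<Rightarrow> real"
    and \<Omega> cmax \<kappa> \<delta> \<beta> :: real and w N :: nat
  assumes "\<Omega> > 0" and "cmax > 0"
    and "bandlimited \<Omega> x" and "bounded_by cmax x" and "finite_energy x"
    and "\<kappa> > 0" and "\<delta> > 0" and "w \<ge> 1" and "\<beta> > 0" and "N \<ge> 1"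
    and "\<And>n. n < N \<Longrightarrow> t n < t (Suc n)"
    and "\<And>n. 1 \<le> n \<Longrightarrow> n \<le> N \<Longrightarrow> b n > 0"
    and "\<And>n. 1 \<le> n \<Longrightarrow> n \<le> N \<Longrightarrow>
           (1 / \<kappa>) * integral {t (n - 1)..t n} (\<lambda>s. x s + b n) = \<delta>"
    and "\<And>n. 1 \<le> n \<Longrightarrow> n \<le> N \<Longrightarrow> b n \<ge> local_max_amp x t w n + \<beta>"
  shows "avg_oversampling N t \<Omega>
           \<le> (avg N b + avg N (local_max_amp x t w)) / (\<kappa> * \<delta>) * (pi / \<Omega>)
       \<and> (avg N b + avg N (local_max_amp x t w)) / (\<kappa> * \<delta>) * (pi / \<Omega>)
           \<le> (avg N b + cmax) / (\<kappa> * \<delta>) * (pi / \<Omega>)"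
proof -
  define c where "c = local_max_amp x t w"
  define T where "T n = t n - t (n - 1)" for n
  define a where "a n = b n + c n" for n
  have bnd: "\<bar>x s\<bar> \<le> cmax" for s using assms(4) unfolding bounded_by_def by auto
  have mono: "t i \<le> t j" if "i \<le> j" "j \<le> N" for i j
    using that
  proof (induction j)
    case 0 then show ?case by simp
  next
    case (Suc j)
    show ?case
    proof (cases "i = Suc j")
      case True then show ?thesis by simp
    next
      case False
      then have "t i \<le> t j" using Suc by simp
      also have "t j < t (Suc j)" using assms(11) Suc.prems by simp
      finally show ?thesis by simp
    qed
  qed
  have bdd: "bdd_above ((\<lambda>s. \<bar>x s\<bar>) ` S)" for S
    using bnd by (intro bdd_aboveI[where M=cmax]) auto
  have key: "c n \<ge> 0 \<and> c n \<le> cmax \<and> (\<forall>s\<in>{t (n-1)..t n}. \<bar>x s\<bar> \<le> c n) \<and> T n > 0"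
    if n: "1 \<le> n" "n \<le> N" for n
  proof -
    have tw: "t (n - w) \<le> t (n - 1)" using mono[of "n-w" "n-1"] n assms(8) by simp
    have tl: "t (n - 1) < t n" using assms(11)[of "n-1"] n by simp
    have ne: "{t (n - w)..t n} \<noteq> {}" using tw tl by simp
    have le: "\<bar>x s\<bar> \<le> c n" if "s \<in> {t (n-w)..t n}" for s
      unfolding c_def local_max_amp_def using that bdd by (intro cSUP_upper) auto
    have "c n \<le> cmax" unfolding c_def local_max_amp_def
      using ne bnd by (intro cSUP_least) auto
    moreover have "c n \<ge> 0" using le[of "t n"] tw tl by force
    moreover have "\<forall>s\<in>{t (n-1)..t n}. \<bar>x s\<bar> \<le> c n" using le tw by auto
    ultimately show ?thesis using tl unfolding T_def by auto
  qed
  have Ta: "\<kappa> * \<delta> \<le> T n * a n" if n: "1 \<le> n" "n \<le> N" for n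
  proof -
    have eq: "integral {t (n - 1)..t n} (\<lambda>s. x s + b n) = \<kappa> * \<delta>"
      using assms(13)[OF n] assms(6) by (simp add: field_simps)
    then have "integral {t (n - 1)..t n} (\<lambda>s. x s + b n) \<noteq> 0"
      using assms(6,7) by simp
    then have int: "(\<lambda>s. x s + b n) integrable_on {t (n - 1)..t n}"
      using not_integrable_integral by blast
    have "integral {t (n - 1)..t n} (\<lambda>s. x s + b n) \<le> integral {t (n - 1)..t n} (\<lambda>s. a n)"
      using key[OF n] int unfolding a_def
      by (intro integral_le) (auto simp: abs_le_iff)
    also have "\<dots> = T n * a n" using key[OF n] by (simp add: T_def)
    finally show ?thesis using eq by simp
  qed
  have apos: "a n > 0" if "1 \<le> n" "n \<le> N" for n
    using key[OF that] assms(12)[OF that] a_def by simp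
  have Npos: "real N > 0" using assms(10) by simp
  have sT: "(\<Sum>n=1..N. T n) > 0"
    using key assms(10) by (intro sum_pos) auto
  have sa: "(\<Sum>n=1..N. a n) > 0"
    using apos assms(10) by (intro sum_pos) auto
  have cs: "(\<Sum>n=1..N. sqrt (T n) * sqrt (a n))\<^sup>2 \<le> (\<Sum>n=1..N. (sqrt (T n))\<^sup>2) * (\<Sum>n=1..N. (sqrt (a n))\<^sup>2)"
    by (rule Cauchy_Schwarz_ineq_sum)
  have "(\<Sum>n=1..N. sqrt (T n))\<^sup>2 = 0 \<or> True" by simp
  have s1: "(\<Sum>n=1..N. (sqrt (T n))\<^sup>2) = (\<Sum>n=1..N. T n)"
    using key by (intro sum.cong) (auto simp: less_imp_le)
  have s2: "(\<Sum>n=1..N. (sqrt (a n))\<^sup>2) = (\<Sum>n=1..N. a n)"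
    using apos by (intro sum.cong) (auto simp: less_imp_le)
  have lb: "real N * sqrt (\<kappa> * \<delta>) \<le> (\<Sum>n=1..N. sqrt (T n) * sqrt (a n))"
  proof -
    have "(\<Sum>n=1..N. sqrt (\<kappa> * \<delta>)) \<le> (\<Sum>n=1..N. sqrt (T n) * sqrt (a n))"
      using Ta by (intro sum_mono) (auto simp: real_sqrt_mult[symmetric])
    then show ?thesis by simp
  qed
  have "(real N * sqrt (\<kappa> * \<delta>))\<^sup>2 \<le> (\<Sum>n=1..N. sqrt (T n) * sqrt (a n))\<^sup>2"
    using lb assms(6,7) by (intro power_mono) auto
  then have main: "real N ^ 2 * (\<kappa> * \<delta>) \<le> (\<Sum>n=1..N. T n) * (\<Sum>n=1..N. a n)"
    using cs s1 s2 assms(6,7) by (simp add: power_mult_distrib)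
  have sumab: "avg N b + avg N c = (\<Sum>n=1..N. a n) / real N"
    unfolding avg_def a_def by (simp add: sum.distrib add_divide_distrib)
  have kd: "\<kappa> * \<delta> > 0" using assms(6,7) by simp
  have pO: "pi / \<Omega> > 0" using assms(1) by simp
  have first: "1 / avg N T \<le> (avg N b + avg N c) / (\<kappa> * \<delta>)"
  proof -
    have "real N * (\<kappa> * \<delta> * real N) \<le> (\<Sum>n=1..N. T n) * (\<Sum>n=1..N. a n)"
      using main by (simp add: power2_eq_square algebra_simps)
    then have h: "real N \<le> (\<Sum>n=1..N. T n) * (\<Sum>n=1..N. a n) / (\<kappa> * \<delta> * real N)"
      using kd Npos by (subst pos_le_divide_eq) auto
    show ?thesis
      unfolding sumab unfolding avg_def using h sT sa Npos kd
      by (simp add: field_simps)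
  qed
  have cle: "avg N c \<le> cmax"
  proof -
    have "(\<Sum>n=1..N. c n) \<le> (\<Sum>n=1..N. cmax)" using key by (intro sum_mono) auto
    then show ?thesis unfolding avg_def using Npos by (simp add: field_simps)
  qed
  have second: "(avg N b + avg N c) / (\<kappa> * \<delta>) \<le> (avg N b + cmax) / (\<kappa> * \<delta>)"
    using cle kd by (intro divide_right_mono) auto
  have ao: "avg_oversampling N t \<Omega> = 1 / avg N T * (pi / \<Omega>)"
    unfolding avg_oversampling_def T_def by simp
  show ?thesis unfolding ao c_def[symmetric]
    using mult_right_mono[OF first, of "pi / \<Omega>"] mult_right_mono[OF second, of "pi / \<Omega>"] pO
    by (simp only: less_imp_le simp_thms)
qed

end
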